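(* Let $L \in K[D]$ with $\operatorname{ord}(L)=d$ and $\operatorname{Sym}_L = S_1 S_2$, where $S_1,S_2$ are homogeneous of degrees $d_1,d_2$, and let $S_0=\gcd(S_1,S_2)$ be homogeneous of degree $d_0$. Then for every partial factorization $F_1\circ F_2$ of $L$ of order $d-d_0$ and of type $(S_1)(S_2)$, there is at most one factorization $L=F_1'\circ F_2'$ of type $(S_1)(S_2)$ which is an extension of $F_1\circ F_2$, i.e. satisfies $\operatorname{ord}(F_i-F_i')<(d-d_0)-(d-d_i)$ for $i=1,2$.
   Context: $K$ is a field with commuting derivations $\partial_1,\dots,\partial_n$, and $K[D]=K[D_1,\dots,D_n]$ is the ring of linear differential operators over $K$: the $D_i$ commute with each other and $D_i\circ a = aD_i+\partial_i(a)$ for $a\in K$. Every $L\in K[D]$ is uniquely $L=\sum_{|J|\le d} a_J D^J$ with $a_J\in K$, $D^J=D_1^{j_1}\cdots D_n^{j_n}$, $|J|=j_1+\dots+j_n$. The order $\operatorname{ord}(L)$ is the largest $|J|$ with $a_J\neq 0$, and $\operatorname{ord}(0)=-\infty$. The symbol $\operatorname{Sym}_L\in K[X_1,\dots,X_n]$ is the homogeneous polynomial $\sum_{|J|=\operatorname{ord}L} a_J X^J$. If $\operatorname{Sym}_L=S_1\cdots S_k$ with homogeneous $S_i$, a factorization of type $(S_1)\cdots(S_k)$ is an equality $L=F_1\circ\cdots\circ F_k$ with $\operatorname{Sym}_{F_i}=S_i$. For $t\in\{0,\dots,\operatorname{ord}L\}$, a partial factorization of $L$ of order $t$ is a composition $F_1\circ\cdots\circ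 F_k$ with $\operatorname{ord}(L-F_1\circ\cdots\circ F_k)<t$; it is of type $(S_1)\cdots(S_k)$ if $\operatorname{Sym}_{F_i}=S_i$ for all $i$. If $d_i=\deg S_i$, $d=\operatorname{ord}L$, and $F_1\circ\cdots\circ F_k$, $F_1'\circ\cdots\circ F_k'$ are partial factorizations of orders $t$ and $t'<t$, then the latter is an extension of the former if $\operatorname{ord}(F_i-F_i')<t-(d-d_i)$ for all $i$. A (complete) factorization is a partial factorization of order $0$. *)

theory Defs
  imports "HOL-Library.Poly_Mapping" "HOL-Library.Extended_Real"
begin

text \<open>Variables / derivations are indexed by a finite linearly ordered type 'v
  (so n = CARD('v)).
  Both differential operators L = sum a_J D^J and polynomials in K[X_1..X_n]
  are represented by their coefficient maps poly_mappings.
  Addition/subtraction of operators and of polynomials is the library addition;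
  the (commutative) product of polynomials is the library product of poly_mapping
  (convolution), while composition of operators is op_comp below.\<close>

type_synonym ('v, 'a) mpoly = "('v \<Rightarrow>\<^sub>0 nat) \<Rightarrow>\<^sub>0 'a"

definition mdeg :: "('v \<Rightarrow>\<^sub>0 nat) \<Rightarrow> nat" where
  "mdeg J = (\<Sum>i\<in>Poly_Mapping.keys J. Poly_Mapping.lookup J i)"

definition is_derivation :: "('a::field \<Rightarrow> 'a) \<Rightarrow> bool" where
  "is_derivation \<delta> \<longleftrightarrow> (\<forall>a b. \<delta> (a + b) = \<delta> a + \<delta> b \<and> \<delta> (a * b) = a * \<delta> b + \<delta> a * b)"

definition commuting_derivations :: "('v \<Rightarrow> 'a::field \<Rightarrow> 'a) \<Rightarrow> bool" where
  "commuting_derivations der \<longleftrightarrow>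
     (\<forall>i. is_derivation (der i)) \<and> (\<forall>i j a. der i (der j a) = der j (der i a))"

definition dpow :: "('v::{finite,linorder} \<Rightarrow> 'a \<Rightarrow> 'a) \<Rightarrow> ('v \<Rightarrow>\<^sub>0 nat) \<Rightarrow> 'a \<Rightarrow> 'a" where
  "dpow der I a = foldr (\<lambda>i. (der i ^^ Poly_Mapping.lookup I i)) (sorted_list_of_set UNIV) a"

definition mchoose :: "('v::finite \<Rightarrow>\<^sub>0 nat) \<Rightarrow> ('v \<Rightarrow>\<^sub>0 nat) \<Rightarrow> nat" where
  "mchoose J I = (\<Prod>i\<in>UNIV. Poly_Mapping.lookup J i choose Poly_Mapping.lookup I i)"

text \<open>Composition in K[D]:  (a D^J) o (b D^K) = sum_{I \<le> J} a * C(J,I) * der^I(b) D^(J-I+K),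
  which is the Leibniz rule coming from D_i o b = b D_i + der_i(b).\<close>
definition op_comp :: "('v::{finite,linorder} \<Rightarrow> 'a::field \<Rightarrow> 'a)
    \<Rightarrow> ('v, 'a) mpoly \<Rightarrow> ('v, 'a) mpoly \<Rightarrow> ('v, 'a) mpoly" where
  "op_comp der L M =
     (\<Sum>J\<in>Poly_Mapping.keys L. \<Sum>K\<in>Poly_Mapping.keys M. \<Sum>I\<in>{I. \<forall>i. Poly_Mapping.lookup I i \<le> Poly_Mapping.lookup J i}.
        Poly_Mapping.single (J - I + K)
          (Poly_Mapping.lookup L J * of_nat (mchoose J I) * dpow der I (Poly_Mapping.lookup M K)))"

definition ord :: "('v, 'a::zero) mpoly \<Rightarrow> ereal" where
  "ord L = (if L = 0 then -\<infinity> else ereal (real (Max (mdeg ` Poly_Mapping.keys L))))"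

definition Sym :: "('v, 'a::zero) mpoly \<Rightarrow> ('v, 'a) mpoly" where
  "Sym L = Abs_poly_mapping (\<lambda>J. if ereal (real (mdeg J)) = ord L then Poly_Mapping.lookup L J else 0)"

definition homogeneous :: "('v, 'a::zero) mpoly \<Rightarrow> nat \<Rightarrow> bool" where
  "homogeneous P k \<longleftrightarrow> P \<noteq> 0 \<and> (\<forall>J\<in>Poly_Mapping.keys P. mdeg J = k)"

definition is_gcd :: "('v::linorder, 'a::field) mpoly \<Rightarrow> ('v, 'a) mpoly \<Rightarrow> ('v, 'a) mpoly \<Rightarrow> bool" where
  "is_gcd S0 S1 S2 \<longleftrightarrow> S0 dvd S1 \<and> S0 dvd S2 \<and> (\<forall>T. T dvd S1 \<and> T dvd S2 \<longrightarrow> T dvd S0)"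

end

theory Submission
  imports Defs "HOL-Library.FuncSet"
begin

abbreviation "lk \<equiv> Poly_Mapping.lookup"
abbreviation "ks \<equiv> Poly_Mapping.keys"
abbreviation "sg \<equiv> Poly_Mapping.single"

definition wdeg :: "('k \<Rightarrow> nat) \<Rightarrow> ('k \<Rightarrow>\<^sub>0 'a::zero) \<Rightarrow> nat" where
  "wdeg w p = (if p = 0 then 0 else Max (w ` ks p))"

definition wtop :: "('k \<Rightarrow> nat) \<Rightarrow> ('k \<Rightarrow>\<^sub>0 'a::zero) \<Rightarrow> ('k \<Rightarrow>\<^sub>0 'a)" where
  "wtop w p = Poly_Mapping.mapp (\<lambda>J c. if w J = wdeg w p then c else 0) p"

lemma wdeg_ge: "J \<in> ks p \<Longrightarrow> w J \<le> wdeg w p"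
  unfolding wdeg_def by (cases "p = 0") auto

lemma wdeg_ex: "p \<noteq> 0 \<Longrightarrow> \<exists>J\<in>ks p. w J = wdeg w p"
proof -
  assume "p \<noteq> 0"
  then have "ks p \<noteq> {}" by simp
  then have "Max (w ` ks p) \<in> w ` ks p" by (intro Max_in) auto
  then obtain J where "J \<in> ks p" "w J = Max (w ` ks p)" by (auto simp del: Max_in)
  then show ?thesis using \<open>p \<noteq> 0\<close> unfolding wdeg_def by auto
qed

lemma wdeg_eqI: "J \<in> ks p \<Longrightarrow> w J = n \<Longrightarrow> (\<forall>K\<in>ks p. w K \<le> n) \<Longrightarrow> wdeg w p = n"
proof -
  assume a: "J \<in> ks p" "w J = n" "\<forall>K\<in>ks p. w K \<le> n"
  then have "p \<noteq> 0" by auto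
  then obtain K where "K \<in> ks p" "w K = wdeg w p" using wdeg_ex by blast
  then show ?thesis using a wdeg_ge[of J p w] by force
qed

lemma wdeg_lessI: "(\<forall>K\<in>ks p. w K < n) \<Longrightarrow> p \<noteq> 0 \<Longrightarrow> wdeg w p < n"
  using wdeg_ex by metis

lemma wdeg_zero_iff: "wdeg w p = 0 \<longleftrightarrow> (\<forall>K\<in>ks p. w K = 0)"
proof
  assume "wdeg w p = 0" then show "\<forall>K\<in>ks p. w K = 0" using wdeg_ge[of _ p w] by force
next
  assume a: "\<forall>K\<in>ks p. w K = 0"
  show "wdeg w p = 0"
  proof (cases "p = 0")
    case False then show ?thesis using wdeg_ex[OF False, of w] a by force
  qed (simp add: wdeg_def)
qed

lemma wdeg_0 [simp]: "wdeg w 0 = 0" by (simp add: wdeg_def)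

lemma lookup_wtop: "lk (wtop w p) J = (if w J = wdeg w p then lk p J else 0)"
  by (auto simp add: wtop_def lookup_mapp when_def in_keys_iff)

lemma keys_wtop: "J \<in> ks (wtop w p) \<longleftrightarrow> J \<in> ks p \<and> w J = wdeg w p"
  by (auto simp add: in_keys_iff lookup_wtop)

lemma wtop_nz: "p \<noteq> 0 \<Longrightarrow> wtop w p \<noteq> 0"
proof -
  assume "p \<noteq> 0"
  then obtain J where "J \<in> ks p" "w J = wdeg w p" using wdeg_ex by blast
  then have "J \<in> ks (wtop w p)" by (simp add: keys_wtop)
  then show ?thesis by auto
qed

lemma wtop_0 [simp]: "wtop w 0 = 0"
  by (simp add: poly_mapping_eqI lookup_wtop)

lemma wdeg_wtop: "wdeg w (wtop w p) = wdeg w p"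
proof (cases "p = 0")
  case False
  then obtain J where "J \<in> ks p" "w J = wdeg w p" using wdeg_ex by blast
  then show ?thesis by (intro wdeg_eqI[of J]) (auto simp: keys_wtop)
qed simp

lemma keys_sub_wtop: "J \<in> ks (p - wtop w p) \<Longrightarrow> w J < wdeg w p"
proof -
  assume a: "J \<in> ks (p - wtop w p)"
  then have "lk p J - lk (wtop w p) J \<noteq> 0" by (simp add: in_keys_iff lookup_minus)
  then have "w J \<noteq> wdeg w p" "J \<in> ks p" by (auto simp: lookup_wtop in_keys_iff split: if_splits)
  then show ?thesis using wdeg_ge[of J p w] by simp
qed

lemma wtop_homog: "(\<forall>K\<in>ks X. w K = wdeg w X) \<Longrightarrow> wtop w X = X"
proof (rule poly_mapping_eqI)
  fix K assume "\<forall>K\<in>ks X. w K = wdeg w X"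
  then show "lk (wtop w X) K = lk X K"
    by (cases "K \<in> ks X") (auto simp: lookup_wtop in_keys_iff)
qed

lemma wperturb:
  fixes X E :: "'k \<Rightarrow>\<^sub>0 'a::ab_group_add"
  assumes "X \<noteq> 0" "\<forall>K\<in>ks E. w K < wdeg w X"
  shows "wdeg w (X+E) = wdeg w X" "wtop w (X+E) = wtop w X"
proof -
  obtain J where J: "J \<in> ks X" "w J = wdeg w X" using wdeg_ex assms(1) by blast
  have E0: "\<And>K. w K = wdeg w X \<Longrightarrow> lk E K = 0" using assms(2) by (metis in_keys_iff less_irrefl)
  have "J \<in> ks (X+E)" using J E0 by (simp add: in_keys_iff lookup_add)
  moreover have "\<forall>K\<in>ks (X+E). w K \<le> wdeg w X"
    using keys_add[of X E] assms(2) wdeg_ge[of _ X w] by fastforce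
  ultimately show 1: "wdeg w (X+E) = wdeg w X" using J by (intro wdeg_eqI) auto
  show "wtop w (X+E) = wtop w X"
    by (rule poly_mapping_eqI) (simp add: lookup_wtop 1 lookup_add E0)
qed

lemma wmult:
  fixes p q :: "'k::{ordered_cancel_comm_monoid_add,linorder} \<Rightarrow>\<^sub>0 'a::idom"
  assumes add: "\<And>a b. w (a+b) = w a + w b" and p: "p \<noteq> 0" and q: "q \<noteq> 0"
  shows "wdeg w (p*q) = wdeg w p + wdeg w q" "wtop w (p*q) = wtop w p * wtop w q"
proof -
  define tp where "tp = wtop w p"
  define tq where "tq = wtop w q"
  define X where "X = tp * tq"
  define E where "E = tp * (q - tq) + (p - tp) * q"
  have pq: "p * q = X + E" unfolding X_def E_def by (simp add: algebra_simps)
  have X0: "X \<noteq> 0" unfolding X_def tp_def tq_def using wtop_nz[OF p, of w] wtop_nz[OF q, of w] by simp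
  have kX: "\<forall>K\<in>ks X. w K = wdeg w p + wdeg w q"
  proof
    fix K assume "K \<in> ks X"
    then obtain a b where "K = a + b" "a \<in> ks tp" "b \<in> ks tq" using keys_mult[of tp tq] X_def by blast
    then show "w K = wdeg w p + wdeg w q" using add by (simp add: tp_def tq_def keys_wtop)
  qed
  have dX: "wdeg w X = wdeg w p + wdeg w q"
  proof -
    obtain J where "J \<in> ks X" "w J = wdeg w X" using wdeg_ex[OF X0] by blast
    then show ?thesis using kX by simp
  qed
  have kE: "\<forall>K\<in>ks E. w K < wdeg w X"
  proof
    fix K assume K: "K \<in> ks E"
    have "K \<in> ks (tp * (q - tq)) \<union> ks ((p - tp) * q)"
      using keys_add[of "tp * (q - tq)" "(p - tp) * q"] K unfolding E_def by (rule subsetD)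
    then show "w K < wdeg w X"
    proof
      assume "K \<in> ks (tp * (q - tq))"
      then obtain a b where ab: "K = a + b" "a \<in> ks tp" "b \<in> ks (q - tq)"
        using keys_mult[of tp "q - tq"] by blast
      have "w a = wdeg w p" using ab(2) unfolding tp_def by (simp add: keys_wtop)
      moreover have "w b < wdeg w q" using ab(3) keys_sub_wtop[of b q w] unfolding tq_def by simp
      ultimately show ?thesis using ab(1) add[of a b] dX by simp
    next
      assume "K \<in> ks ((p - tp) * q)"
      then obtain a b where ab: "K = a + b" "a \<in> ks (p - tp)" "b \<in> ks q"
        using keys_mult[of "p - tp" q] by blast
      have "w a < wdeg w p" using ab(2) keys_sub_wtop[of a p w] unfolding tp_def by simp
      moreover have "w b \<le> wdeg w q" using wdeg_ge[OF ab(3)] .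
      ultimately show ?thesis using ab(1) add[of a b] dX by simp
    qed
  qed
  have hX: "wtop w X = X" using kX dX by (intro wtop_homog) simp
  show "wdeg w (p*q) = wdeg w p + wdeg w q" using wperturb[OF X0 kE] pq dX by simp
  show "wtop w (p*q) = wtop w p * wtop w q" using wperturb[OF X0 kE] pq hX X_def tp_def tq_def by simp
qed

lemma mdeg_alt: "mdeg (J::'v::finite \<Rightarrow>\<^sub>0 nat) = (\<Sum>i\<in>UNIV. lk J i)"
  unfolding mdeg_def by (rule sum.mono_neutral_left) (auto simp: in_keys_iff)

lemma mdeg_add: "mdeg ((a::'v::finite \<Rightarrow>\<^sub>0 nat) + b) = mdeg a + mdeg b"
  by (simp add: mdeg_alt lookup_add sum.distrib)

lemma mdeg_eq0: "mdeg (J::'v::finite \<Rightarrow>\<^sub>0 nat) = 0 \<Longrightarrow> J = 0"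
  by (rule poly_mapping_eqI) (simp add: mdeg_alt)

definition vw :: "'v \<Rightarrow> ('v \<Rightarrow>\<^sub>0 nat) \<Rightarrow> nat" where "vw x J = lk J x"

lemma vw_add: "vw x (a + b) = vw x a + vw x b" by (simp add: vw_def lookup_add)

abbreviation tdeg :: "(('v \<Rightarrow>\<^sub>0 nat) \<Rightarrow>\<^sub>0 'a::zero) \<Rightarrow> nat" where "tdeg \<equiv> wdeg mdeg"

definition irr :: "'b::comm_semiring_1 \<Rightarrow> bool" where
  "irr p \<longleftrightarrow> p \<noteq> 0 \<and> \<not> p dvd 1 \<and> (\<forall>a b. p = a * b \<longrightarrow> a dvd 1 \<or> b dvd 1)"

lemma wdeg_one: "(\<And>a b. w (a+b) = w a + w b) \<Longrightarrow> wdeg w (1::('k::comm_monoid_add \<Rightarrow>\<^sub>0 'a::{zero_neq_one})) = 0"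
proof -
  assume add: "\<And>a b. w (a+b) = w a + w b"
  have "w 0 = 0" using add[of 0 0] by simp
  then show ?thesis by (simp add: wdeg_zero_iff)
qed

lemma unit_wdeg:
  fixes u :: "('v::{finite,linorder}, 'a::field) mpoly"
  assumes "u dvd 1" and add: "\<And>a b. w (a+b) = w a + w b"
  shows "wdeg w u = 0"
proof -
  obtain v where "1 = u * v" using assms(1) by (auto elim: dvdE)
  then have "u \<noteq> 0" "v \<noteq> 0" by auto
  then have e: "wdeg w (u*v) = wdeg w u + wdeg w v" using wmult[OF add] by blast
  have "wdeg w (u*v) = 0" using \<open>1 = u * v\<close> wdeg_one[OF add] by metis
  then show ?thesis using e by linarith
qed

lemma tdeg0_unit:
  fixes p :: "('v::{finite,linorder}, 'a::field) mpoly"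
  assumes "p \<noteq> 0" "tdeg p = 0"
  shows "p dvd 1"
proof -
  have k: "\<forall>K\<in>ks p. K = 0" using assms(2) mdeg_eq0 by (auto simp: wdeg_zero_iff)
  have "p = sg 0 (lk p 0)"
  proof (rule poly_mapping_eqI)
    fix K show "lk p K = lk (sg 0 (lk p 0)) K"
      using k by (cases "K = 0") (auto simp: lookup_single in_keys_iff)
  qed
  moreover have "lk p 0 \<noteq> 0" using k assms(1) by (metis in_keys_iff keys_eq_empty ex_in_conv)
  ultimately have "1 = p * sg 0 (inverse (lk p 0))"
    by (metis mult_single add_0 right_inverse single_one)
  then show ?thesis by (rule dvdI)
qed

definition inV :: "'v set \<Rightarrow> ('v, 'a::zero) mpoly \<Rightarrow> bool" where
  "inV V p \<longleftrightarrow> (\<forall>J\<in>ks p. \<forall>y. y \<notin> V \<longrightarrow> lk J y = 0)"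

lemma inV_iff: "inV V p \<longleftrightarrow> (\<forall>y. y \<notin> V \<longrightarrow> wdeg (vw y) p = 0)"
  unfolding inV_def wdeg_zero_iff vw_def by auto

lemma inV_0 [simp]: "inV V 0" by (simp add: inV_def)
lemma inV_1 [simp]: "inV V (1::('v,'a::zero_neq_one) mpoly)" by (simp add: inV_def)
lemma inV_UNIV [simp]: "inV UNIV p" by (simp add: inV_def)

lemma inV_add: "inV V p \<Longrightarrow> inV V q \<Longrightarrow> inV V (p + q)"
  unfolding inV_def using keys_add[of p q] by blast

lemma inV_diff: "inV V p \<Longrightarrow> inV V (q::('v,'a::ab_group_add) mpoly) \<Longrightarrow> inV V (p - q)"
  unfolding inV_def using keys_diff[of p q] by blast

lemma inV_uminus: "inV V (q::('v,'a::ab_group_add) mpoly) \<Longrightarrow> inV V (- q)"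
  unfolding inV_def by simp

lemma inV_mult: "inV V p \<Longrightarrow> inV V (q::('v,'a::semiring_0) mpoly) \<Longrightarrow> inV V (p * q)"
proof -
  assume a: "inV V p" "inV V q"
  show ?thesis unfolding inV_def
  proof (intro ballI allI impI)
    fix J y assume "J \<in> ks (p*q)" "y \<notin> V"
    then obtain a b where "J = a + b" "a \<in> ks p" "b \<in> ks q" using keys_mult[of p q] by blast
    then show "lk J y = 0" using a \<open>y \<notin> V\<close> by (simp add: inV_def lookup_add)
  qed
qed

lemma inV_power: "inV V (p::('v,'a::semiring_1) mpoly) \<Longrightarrow> inV V (p ^ n)"
  by (induction n) (simp_all add: inV_mult)

lemma inV_single: "(\<forall>y. y \<notin> V \<longrightarrow> lk J y = 0) \<Longrightarrow> inV V (sg J c)"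
  unfolding inV_def by simp

lemma inV_div:
  fixes p q :: "('v::{finite,linorder}, 'a::field) mpoly"
  assumes "inV V (p*q)" "p \<noteq> 0" "q \<noteq> 0"
  shows "inV V q"
  unfolding inV_iff
proof (intro allI impI)
  fix y assume "y \<notin> V"
  then have "wdeg (vw y) (p*q) = 0" using assms(1) by (simp add: inV_iff)
  then show "wdeg (vw y) q = 0" using wmult(1)[OF vw_add[of y] assms(2,3)] by simp
qed

lemma inV_div':
  fixes p q :: "('v::{finite,linorder}, 'a::field) mpoly"
  assumes "inV V y" "p dvd y" "p \<noteq> 0"
  shows "\<exists>q. y = p * q \<and> inV V q"
proof -
  obtain q where q: "y = p * q" using assms(2) by (auto elim: dvdE)
  show ?thesis
  proof (cases "q = 0")
    case True then show ?thesis using q by auto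
  next
    case False then show ?thesis using q assms inV_div by blast
  qed
qed

lemma inV_insert: "inV (insert x V) p \<Longrightarrow> wdeg (vw x) p = 0 \<Longrightarrow> inV V p"
  unfolding inV_iff by (metis insert_iff)

lemma inV_mono: "inV V p \<Longrightarrow> V \<subseteq> W \<Longrightarrow> inV W p"
  unfolding inV_def by blast

definition xm :: "'v \<Rightarrow> nat \<Rightarrow> ('v, 'a::{zero,one}) mpoly" where
  "xm x e = sg (sg x e) 1"

lemma xm_mult: "xm x a * (xm x b :: ('v, 'a::semiring_1) mpoly) = xm x (a + b)"
  by (simp add: xm_def mult_single single_add)

lemma xm_nz [simp]: "(xm x e :: ('v, 'a::zero_neq_one) mpoly) \<noteq> 0"
  by (metis xm_def keys_single keys_zero one_neq_zero singleton_insert_inj_eq' insert_not_empty)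

lemma xm_0 [simp]: "(xm x 0 :: ('v, 'a::zero_neq_one) mpoly) = 1"
  by (simp add: xm_def)

lemma keys_xm: "ks (xm x e :: ('v, 'a::zero_neq_one) mpoly) = {sg x e}"
  by (simp add: xm_def)

lemma wdeg_xm: "wdeg (vw x) (xm x e :: ('v, 'a::zero_neq_one) mpoly) = e"
  by (rule wdeg_eqI[of "sg x e"]) (auto simp: keys_xm vw_def)

lemma wtop_xm: "wtop (vw x) (xm x e :: ('v, 'a::zero_neq_one) mpoly) = xm x e"
  by (rule wtop_homog) (simp add: keys_xm wdeg_xm vw_def)

lemma inV_xm: "x \<in> V \<Longrightarrow> inV V (xm x e :: ('v, 'a::zero_neq_one) mpoly)"
  unfolding inV_def by (auto simp: keys_xm lookup_single when_def)

lemma repr: "(\<Sum>J\<in>ks p. sg J (lk p J)) = p"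
proof (rule poly_mapping_eqI)
  fix K
  have "lk (\<Sum>J\<in>ks p. sg J (lk p J)) K = (\<Sum>J\<in>ks p. if J = K then lk p J else 0)"
    by (simp add: lookup_sum lookup_single when_def)
  also have "\<dots> = lk p K" by (simp add: in_keys_iff)
  finally show "lk (\<Sum>J\<in>ks p. sg J (lk p J)) K = lk p K" .
qed

definition lcx :: "'v \<Rightarrow> ('v, 'a::comm_monoid_add) mpoly \<Rightarrow> ('v, 'a) mpoly" where
  "lcx x p = (\<Sum>J\<in>ks (wtop (vw x) p). sg (J - sg x (wdeg (vw x) p)) (lk p J))"

lemma wtop_lcx: "wtop (vw x) p = lcx x p * (xm x (wdeg (vw x) p) :: ('v, 'a::field) mpoly)"
proof -
  define d where "d = wdeg (vw x) p"
  define T where "T = wtop (vw x) p"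
  have "lcx x p * xm x d = (\<Sum>J\<in>ks T. sg (J - sg x d) (lk p J) * sg (sg x d) 1)"
    unfolding lcx_def xm_def T_def d_def by (simp add: sum_distrib_right)
  also have "\<dots> = (\<Sum>J\<in>ks T. sg J (lk T J))"
  proof (rule sum.cong)
    fix J assume J: "J \<in> ks T"
    then have "lk J x = d" unfolding T_def d_def by (simp add: keys_wtop vw_def)
    then have "J - sg x d + sg x d = J"
      by (intro poly_mapping_eqI) (auto simp add: lookup_add lookup_minus lookup_single when_def)
    moreover have "lk T J = lk p J" using J unfolding T_def by (simp add: keys_wtop lookup_wtop)
    ultimately show "sg (J - sg x d) (lk p J) * sg (sg x d) 1 = sg J (lk T J)"
      by (simp add: mult_single)
  qed simp
  also have "\<dots> = T" by (rule repr)
  finally show ?thesis unfolding T_def d_def by simp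
qed

lemma keys_lcx: "J \<in> ks (lcx x p) \<Longrightarrow> \<exists>K\<in>ks p. J = K - sg x (wdeg (vw x) p) \<and> lk K x = wdeg (vw x) p"
proof -
  assume a: "J \<in> ks (lcx x p)"
  have "J \<in> (\<Union>K\<in>ks (wtop (vw x) p). ks (sg (K - sg x (wdeg (vw x) p)) (lk p K)))"
    using subsetD[OF keys_sum a[unfolded lcx_def]] .
  then obtain K where "K \<in> ks (wtop (vw x) p)" "J \<in> ks (sg (K - sg x (wdeg (vw x) p)) (lk p K))"
    by blast
  then have "J = K - sg x (wdeg (vw x) p)" "K \<in> ks p" "lk K x = wdeg (vw x) p"
    by (simp_all add: keys_wtop vw_def split: if_splits)
  then show ?thesis by blast
qed

lemma lcx_free: "wdeg (vw x) (lcx x p) = 0"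
  unfolding wdeg_zero_iff
proof
  fix J assume "J \<in> ks (lcx x p)"
  then obtain K where K: "J = K - sg x (wdeg (vw x) p)" "lk K x = wdeg (vw x) p"
    using keys_lcx[of J x p] by blast
  have "lk J x = lk K x - lk (sg x (wdeg (vw x) p)) x" using K(1) by (simp only: lookup_minus)
  also have "\<dots> = 0" unfolding K(2) lookup_single_eq by simp
  finally show "vw x J = 0" unfolding vw_def .
qed

lemma lcx_inV: "inV V p \<Longrightarrow> inV V (lcx x p)"
  unfolding inV_def
proof (intro ballI allI impI)
  fix J y assume a: "\<forall>J\<in>ks p. \<forall>y. y \<notin> V \<longrightarrow> lk J y = 0" "J \<in> ks (lcx x p)" "y \<notin> V"
  then obtain K where K: "K \<in> ks p" "J = K - sg x (wdeg (vw x) p)" using keys_lcx[of J x p] by blast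
  have "lk J y = lk K y - lk (sg x (wdeg (vw x) p)) y" using K(2) by (simp only: lookup_minus)
  also have "lk K y = 0" using a(1) K(1) a(3) by blast
  finally show "lk J y = 0" by simp
qed

lemma lcx_inV_insert: "inV (insert x V) p \<Longrightarrow> inV V (lcx x p)"
  by (rule inV_insert[of x, OF lcx_inV]) (assumption, rule lcx_free)

lemma lcx_nz: "(p::('v, 'a::field) mpoly) \<noteq> 0 \<Longrightarrow> lcx x p \<noteq> 0"
proof
  assume "p \<noteq> 0" "lcx x p = 0"
  then have "wtop (vw x) p = 0" using wtop_lcx[of x p] by simp
  then show False using wtop_nz[OF \<open>p \<noteq> 0\<close>] by blast
qed

lemma lcx_0 [simp]: "lcx x 0 = 0" by (simp add: lcx_def)

lemma wtop_free: "wdeg (vw x) c = 0 \<Longrightarrow> wtop (vw x) c = c"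
  by (rule wtop_homog) (simp add: wdeg_zero_iff)

lemma lcx_free_self: "wdeg (vw x) (p::('v, 'a::field) mpoly) = 0 \<Longrightarrow> lcx x p = p"
  using wtop_lcx[of x p] wtop_free[of x p] by simp

lemma lcx_mult:
  fixes p q :: "('v::{finite,linorder}, 'a::field) mpoly"
  assumes "p \<noteq> 0" "q \<noteq> 0"
  shows "lcx x (p*q) = lcx x p * lcx x q"
proof -
  note m = wmult[OF vw_add[of x] assms]
  have "lcx x (p*q) * xm x (wdeg (vw x) p + wdeg (vw x) q) = wtop (vw x) (p*q)"
    using wtop_lcx[of x "p*q"] m(1) by simp
  also have "\<dots> = (lcx x p * lcx x q) * xm x (wdeg (vw x) p + wdeg (vw x) q)"
    using m(2) wtop_lcx[of x p] wtop_lcx[of x q] by (simp add: xm_mult[symmetric] algebra_simps)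
  finally show ?thesis by simp
qed

lemma wdrop:
  fixes A B :: "'k \<Rightarrow>\<^sub>0 'a::ab_group_add"
  assumes "wdeg w A = n" "wdeg w B = n" "wtop w A = wtop w B"
  shows "A - B = 0 \<or> wdeg w (A - B) < n"
proof (cases "A - B = 0")
  case False
  have "\<forall>K\<in>ks (A - B). w K < n"
  proof
    fix K assume K: "K \<in> ks (A - B)"
    then have ne: "lk A K \<noteq> lk B K" by (simp add: in_keys_iff lookup_minus)
    have "w K \<noteq> n"
    proof
      assume "w K = n"
      then have "lk (wtop w A) K = lk A K" "lk (wtop w B) K = lk B K"
        using assms(1,2) by (simp_all add: lookup_wtop)
      then show False using ne assms(3) by simp
    qed
    moreover have "K \<in> ks A \<or> K \<in> ks B" using K keys_diff[of A B] by blast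
    then have "w K \<le> n" using wdeg_ge[of K A w] wdeg_ge[of K B w] assms by auto
    ultimately show "w K < n" by simp
  qed
  then show ?thesis using wdeg_lessI False by blast
qed simp

lemma pdiv:
  fixes r :: "('v::{finite,linorder}, 'a::field) mpoly"
  assumes r: "r \<noteq> 0" and xW: "x \<in> W" and rW: "inV W r"
  shows "inV W f \<Longrightarrow> \<exists>k q s. lcx x r ^ k * f = q * r + s \<and>
            (s = 0 \<or> wdeg (vw x) s < wdeg (vw x) r) \<and> inV W q \<and> inV W s"
proof (induction "wdeg (vw x) f" arbitrary: f rule: less_induct)
  case less
  define \<delta> where "\<delta> = wdeg (vw x) r"
  show ?case
  proof (cases "f = 0 \<or> wdeg (vw x) f < \<delta>")
    case True
    then show ?thesis using less.prems
      by (intro exI[of _ 0] exI[of _ 0] exI[of _ f]) (auto simp: \<delta>_def)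
  next
    case False
    then have f0: "f \<noteq> 0" and dle: "\<delta> \<le> wdeg (vw x) f" by auto
    define df where "df = wdeg (vw x) f"
    define e where "e = df - \<delta>"
    define A where "A = lcx x r * f"
    define B where "B = lcx x f * xm x e * r"
    have lr0: "lcx x r \<noteq> 0" using lcx_nz[OF r] .
    have lf0: "lcx x f \<noteq> 0" using lcx_nz[OF f0] .
    note wm = wmult[OF vw_add[of x]]
    have dA: "wdeg (vw x) A = df"
      unfolding A_def using wm(1)[OF lr0 f0] lcx_free[of x r] df_def by simp
    have tA: "wtop (vw x) A = lcx x r * (lcx x f * xm x df)"
      unfolding A_def using wm(2)[OF lr0 f0] wtop_free[OF lcx_free[of x r]] wtop_lcx[of x f] df_def
      by simp
    have lfx: "lcx x f * xm x e \<noteq> 0" using lf0 by simp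
    have dB1: "wdeg (vw x) B = wdeg (vw x) (lcx x f * xm x e) + \<delta>"
      unfolding B_def \<delta>_def using wm(1)[OF lfx r] .
    have dB2: "wdeg (vw x) (lcx x f * xm x e) = e"
      using wm(1)[OF lf0 xm_nz, of x e] lcx_free[of x f] wdeg_xm[of x e] by simp
    have dB: "wdeg (vw x) B = df" using dB1 dB2 e_def dle df_def by simp
    have tB1: "wtop (vw x) B = wtop (vw x) (lcx x f * xm x e) * wtop (vw x) r"
      unfolding B_def using wm(2)[OF lfx r] .
    have tB2: "wtop (vw x) (lcx x f * xm x e) = lcx x f * xm x e"
    proof -
      have "wtop (vw x) (xm x e :: ('v,'a) mpoly) = xm x e" by (rule wtop_xm)
      then show ?thesis using wm(2)[OF lf0 xm_nz, of x e] wtop_free[OF lcx_free[of x f]] by simp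
    qed
    have tB: "wtop (vw x) B = lcx x f * xm x e * (lcx x r * xm x \<delta>)"
      using tB1 tB2 wtop_lcx[of x r] \<delta>_def by simp
    have "xm x e * xm x \<delta> = (xm x df :: ('v, 'a) mpoly)" using xm_mult[of x e \<delta>] e_def dle df_def by simp
    then have tAB: "wtop (vw x) A = wtop (vw x) B" using tA tB by (simp add: algebra_simps)
    have inf: "inV W (lcx x f)" using lcx_inV[OF less.prems] .
    have inr: "inV W (lcx x r)" using lcx_inV[OF rW] .
    have inxm: "inV W (xm x e :: ('v, 'a) mpoly)" using inV_xm[OF xW] .
    have inA: "inV W A" unfolding A_def using inr less.prems by (rule inV_mult)
    have inB: "inV W B" unfolding B_def using inf inxm rW by (intro inV_mult)
    have drop: "A - B = 0 \<or> wdeg (vw x) (A - B) < df" using wdrop[OF dA dB tAB] .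
    show ?thesis
    proof (cases "A - B = 0")
      case True
      then have "lcx x r ^ 1 * f = (lcx x f * xm x e) * r + 0" unfolding A_def B_def by (simp add: algebra_simps)
      moreover have "inV W (lcx x f * xm x e)" using inf inxm by (rule inV_mult)
      ultimately show ?thesis
        by (intro exI[of _ 1] exI[of _ "lcx x f * xm x e"] exI[of _ 0]) simp
    next
      case False
      then have "wdeg (vw x) (A - B) < wdeg (vw x) f" using drop df_def by simp
      moreover have "inV W (A - B)" using inA inB by (rule inV_diff)
      ultimately obtain k q s where ks: "lcx x r ^ k * (A - B) = q * r + s"
          "s = 0 \<or> wdeg (vw x) s < wdeg (vw x) r" "inV W q" "inV W s"
        using less.hyps by blast
      have "lcx x r ^ Suc k * f = lcx x r ^ k * (A - B) + lcx x r ^ k * B"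
        unfolding A_def by (simp add: algebra_simps)
      also have "\<dots> = (q + lcx x r ^ k * lcx x f * xm x e) * r + s"
        using ks(1) unfolding B_def by (simp add: algebra_simps)
      finally have "lcx x r ^ Suc k * f = (q + lcx x r ^ k * lcx x f * xm x e) * r + s" .
      moreover have "inV W (q + lcx x r ^ k * lcx x f * xm x e)"
        using ks(3) inr inf inxm by (intro inV_add inV_mult inV_power)
      ultimately show ?thesis using ks(2,4) by blast
    qed
  qed
qed

type_synonym ('v, 'a) mp = "('v, 'a) mpoly"

definition PrimeV :: "'v set \<Rightarrow> ('v::{finite,linorder}, 'a::field) mpoly itself \<Rightarrow> bool" where
  "PrimeV V T \<longleftrightarrow> (\<forall>f g h :: ('v,'a) mpoly. inV V f \<longrightarrow> inV V g \<longrightarrow> inV V h \<longrightarrow> irr f \<longrightarrow>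
      f dvd g * h \<longrightarrow> f dvd g \<or> f dvd h)"

lemma PrimeV_D:
  fixes f :: "('v::{finite,linorder}, 'a::field) mpoly"
  shows "PrimeV V TYPE(('v,'a) mpoly) \<Longrightarrow> inV V f \<Longrightarrow> inV V g \<Longrightarrow> inV V h \<Longrightarrow> irr f \<Longrightarrow> f dvd g * h \<Longrightarrow> f dvd g \<or> f dvd h"
  unfolding PrimeV_def by blast

lemma nonunit_tdeg:
  fixes p :: "('v::{finite,linorder}, 'a::field) mpoly"
  shows "p \<noteq> 0 \<Longrightarrow> \<not> p dvd 1 \<Longrightarrow> tdeg p > 0"
  using tdeg0_unit[of p] by (cases "tdeg p") auto

lemma unit_vw: "(u::('v::{finite,linorder}, 'a::field) mpoly) dvd 1 \<Longrightarrow> wdeg (vw x) u = 0"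
  by (rule unit_wdeg) (simp_all add: vw_add)

lemma irr_factor:
  fixes c :: "('v::{finite,linorder}, 'a::field) mpoly"
  shows "inV V c \<Longrightarrow> c \<noteq> 0 \<Longrightarrow> \<not> c dvd 1 \<Longrightarrow> \<exists>p. irr p \<and> inV V p \<and> p dvd c"
proof (induction "tdeg c" arbitrary: c rule: less_induct)
  case less
  show ?case
  proof (cases "irr c")
    case True then show ?thesis using less.prems by (intro exI[of _ c]) simp
  next
    case False
    then have "\<not> (\<forall>a b. c = a * b \<longrightarrow> a dvd 1 \<or> b dvd 1)"
      using less.prems(2,3) unfolding irr_def by simp
    then obtain a b where ab: "c = a * b" "\<not> a dvd 1" "\<not> b dvd 1" by blast
    then have a0: "a \<noteq> 0" and b0: "b \<noteq> 0" using less.prems(2) by auto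
    have "tdeg c = tdeg a + tdeg b" using wmult(1)[OF mdeg_add a0 b0] ab(1) by simp
    moreover have "tdeg b > 0" using nonunit_tdeg[OF b0 ab(3)] .
    ultimately have lt: "tdeg a < tdeg c" by simp
    have "inV V a" using inV_div[of V b a] less.prems(1) ab(1) a0 b0 by (simp add: mult.commute)
    then obtain p where "irr p" "inV V p" "p dvd a" using less.hyps[OF lt _ a0 ab(2)] by blast
    moreover have "p dvd c" using \<open>p dvd a\<close> ab(1) by (simp add: dvd_mult2)
    ultimately show ?thesis by blast
  qed
qed

lemma inV_wtop: "inV V p \<Longrightarrow> inV V (wtop w p)"
  unfolding inV_def by (simp add: keys_wtop)

lemma free_of_inV: "inV V p \<Longrightarrow> x \<notin> V \<Longrightarrow> wdeg (vw x) p = 0"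
  unfolding inV_iff by blast

lemma gauss_const:
  fixes p :: "('v::{finite,linorder}, 'a::field) mpoly"
  assumes PV: "PrimeV V TYPE(('v,'a) mpoly)" and xV: "x \<notin> V" and pV: "inV V p" and ip: "irr p"
  shows "inV (insert x V) f \<Longrightarrow> inV (insert x V) t \<Longrightarrow> p dvd f * t \<Longrightarrow> p dvd f \<or> p dvd t"
proof (induction "wdeg (vw x) f + wdeg (vw x) t" arbitrary: f t rule: less_induct)
  case less
  show ?case
  proof (cases "f = 0 \<or> t = 0")
    case True then show ?thesis by auto
  next
    case False
    then have f0: "f \<noteq> 0" and t0: "t \<noteq> 0" by auto
    have px: "wdeg (vw x) p = 0" using free_of_inV[OF pV xV] .
    obtain z where z: "f * t = p * z" using less.prems(3) by (auto elim: dvdE)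
    have p0: "p \<noteq> 0" using ip by (simp add: irr_def)
    have z0: "z \<noteq> 0" using z f0 t0 by auto
    have "lcx x f * lcx x t = p * lcx x z"
      using lcx_mult[OF f0 t0, of x] lcx_mult[OF p0 z0, of x] lcx_free_self[OF px] z by simp
    then have "p dvd lcx x f * lcx x t" by simp
    moreover have "inV V (lcx x f)" using lcx_inV_insert[OF less.prems(1)] .
    moreover have "inV V (lcx x t)" using lcx_inV_insert[OF less.prems(2)] .
    ultimately have "p dvd lcx x f \<or> p dvd lcx x t"
      using PrimeV_D[OF PV pV _ _ ip] by blast
    then show ?thesis
    proof
      assume pl: "p dvd lcx x f"
      define f' where "f' = f - wtop (vw x) f"
      have pw: "p dvd wtop (vw x) f" using pl wtop_lcx[of x f] by simp
      have ff: "f = f' + wtop (vw x) f" unfolding f'_def by simp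
      show ?thesis
      proof (cases "f' = 0")
        case True then show ?thesis using pw ff by simp
      next
        case False
        have "\<forall>K\<in>ks f'. vw x K < wdeg (vw x) f" unfolding f'_def using keys_sub_wtop[of _ f "vw x"] by blast
        then have "wdeg (vw x) f' < wdeg (vw x) f" using wdeg_lessI False by blast
        moreover have "inV (insert x V) f'" unfolding f'_def
          using less.prems(1) inV_wtop[OF less.prems(1)] by (rule inV_diff)
        moreover have "p dvd f' * t"
        proof -
          have "f' * t = f * t - wtop (vw x) f * t" unfolding f'_def by (simp add: algebra_simps)
          then show ?thesis using less.prems(3) pw by (simp add: dvd_diff)
        qed
        ultimately have "p dvd f' \<or> p dvd t" using less.hyps less.prems(2) by simp
        then show ?thesis
        proof
          assume "p dvd f'"
          then have "p dvd f' + wtop (vw x) f" using pw by (rule dvd_add)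
          then show ?thesis using ff by simp
        qed simp
      qed
    next
      assume pl: "p dvd lcx x t"
      define t' where "t' = t - wtop (vw x) t"
      have pw: "p dvd wtop (vw x) t" using pl wtop_lcx[of x t] by simp
      have tt: "t = t' + wtop (vw x) t" unfolding t'_def by simp
      show ?thesis
      proof (cases "t' = 0")
        case True then show ?thesis using pw tt by simp
      next
        case False
        have "\<forall>K\<in>ks t'. vw x K < wdeg (vw x) t" unfolding t'_def using keys_sub_wtop[of _ t "vw x"] by blast
        then have "wdeg (vw x) t' < wdeg (vw x) t" using wdeg_lessI False by blast
        moreover have "inV (insert x V) t'" unfolding t'_def
          using less.prems(2) inV_wtop[OF less.prems(2)] by (rule inV_diff)
        moreover have "p dvd f * t'"
        proof -
          have "f * t' = f * t - f * wtop (vw x) t" unfolding t'_def by (simp add: algebra_simps)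
          then show ?thesis using less.prems(3) pw by (simp add: dvd_diff)
        qed
        ultimately have "p dvd f \<or> p dvd t'" using less.hyps less.prems(1) by simp
        then show ?thesis
        proof
          assume "p dvd t'"
          then have "p dvd t' + wtop (vw x) t" using pw by (rule dvd_add)
          then show ?thesis using tt by simp
        qed simp
      qed
    qed
  qed
qed

lemma irr_nonunit: "irr p \<Longrightarrow> \<not> p dvd 1" by (simp add: irr_def)
lemma irr_nz: "irr p \<Longrightarrow> p \<noteq> 0" by (simp add: irr_def)
lemma irr_split: "irr f \<Longrightarrow> f = a * b \<Longrightarrow> a dvd 1 \<or> b dvd 1" by (simp add: irr_def)

lemma cancel1:
  fixes f :: "('v::{finite,linorder}, 'a::field) mpoly"
  assumes PV: "PrimeV V TYPE(('v,'a) mpoly)" and xV: "x \<notin> V" and irf: "irr f"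
    and fW: "inV (insert x V) f" and fx: "wdeg (vw x) f > 0"
  shows "inV V c \<Longrightarrow> c \<noteq> 0 \<Longrightarrow> inV (insert x V) h \<Longrightarrow> f dvd c * h \<Longrightarrow> f dvd h"
proof (induction "tdeg c" arbitrary: c rule: less_induct)
  case less
  show ?case
  proof (cases "c dvd 1")
    case True
    then obtain c' where "1 = c * c'" by (auto elim: dvdE)
    then have "h = c' * (c * h)" by (simp add: algebra_simps)
    then show ?thesis using less.prems(4) by (metis dvd_mult)
  next
    case False
    obtain p where p: "irr p" "inV V p" "p dvd c" using irr_factor[OF less.prems(1,2) False] by blast
    have p0: "p \<noteq> 0" using irr_nz[OF p(1)] .
    obtain c' where c': "c = p * c'" "inV V c'" using inV_div'[OF less.prems(1) p(3) p0] by blast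
    have c'0: "c' \<noteq> 0" using c' less.prems(2) by auto
    have "tdeg c = tdeg p + tdeg c'" using wmult(1)[OF mdeg_add p0 c'0] c'(1) by simp
    moreover have "tdeg p > 0" using nonunit_tdeg[OF p0 irr_nonunit[OF p(1)]] .
    ultimately have lt: "tdeg c' < tdeg c" by simp
    show ?thesis
    proof (cases "h = 0")
      case True then show ?thesis by simp
    next
      case False
      have f0: "f \<noteq> 0" using irr_nz[OF irf] .
      have chW: "inV (insert x V) (c * h)"
        using inV_mult[OF inV_mono[OF less.prems(1)] less.prems(3)] by blast
      obtain t where t: "c * h = f * t" "inV (insert x V) t" using inV_div'[OF chW less.prems(4) f0] by blast
      have "p dvd f * t" using t(1) c'(1) by (metis dvd_mult2 dvd_triv_left mult.assoc)
      then have "p dvd f \<or> p dvd t" using gauss_const[OF PV xV p(2) p(1) fW t(2)] by blast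
      then show ?thesis
      proof
        assume "p dvd f"
        then obtain u where u: "f = p * u" by (auto elim: dvdE)
        then have "u dvd 1" using irr_split[OF irf u] irr_nonunit[OF p(1)] by blast
        then have "wdeg (vw x) u = 0" by (rule unit_vw)
        moreover have "wdeg (vw x) p = 0" using free_of_inV[OF p(2) xV] .
        moreover have "u \<noteq> 0" using u f0 by auto
        ultimately have "wdeg (vw x) f = 0" using wmult(1)[OF vw_add[of x] p0] u by simp
        then show ?thesis using fx by simp
      next
        assume "p dvd t"
        then obtain t' where t': "t = p * t'" by (auto elim: dvdE)
        have "p * (c' * h) = p * (f * t')" using t(1) t' c'(1) by (simp add: algebra_simps)
        then have "c' * h = f * t'" using p0 by simp
        then have "f dvd c' * h" by simp
        then show ?thesis using less.hyps[OF lt c'(2) c'0 less.prems(3)] by blast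
      qed
    qed
  qed
qed


lemma prime_step:
  fixes f g h :: "('v::{finite,linorder}, 'a::field) mpoly"
  assumes PV: "PrimeV V TYPE(('v,'a) mpoly)" and xV: "x \<notin> V"
    and fW: "inV (insert x V) f" and gW: "inV (insert x V) g" and hW: "inV (insert x V) h"
    and irf: "irr f" and fgh: "f dvd g * h"
  shows "f dvd g \<or> f dvd h"
proof (cases "wdeg (vw x) f = 0")
  case True
  then have "inV V f" using inV_insert[OF fW] by blast
  then show ?thesis using gauss_const[OF PV xV _ irf gW hW fgh] by blast
next
  case False
  then have fx: "wdeg (vw x) f > 0" by simp
  define W where "W = insert x V"
  have xW: "x \<in> W" unfolding W_def by simp
  have f0: "f \<noteq> 0" using irr_nz[OF irf] .
  note canc = cancel1[OF PV xV irf fW fx]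
  show ?thesis
  proof (cases "f dvd g")
    case True then show ?thesis by simp
  next
    case False
    note nfg = False
    have "f dvd h"
    proof -
    define inT where "inT t \<longleftrightarrow> inV W t \<and> (\<exists>c a b. inV V c \<and> c \<noteq> 0 \<and> inV W a \<and> inV W b \<and> c * t = a * f + b * g)" for t
    have Tf: "inT f" unfolding inT_def W_def using fW
      by (intro conjI exI[of _ 1] exI[of _ 1] exI[of _ 0]) simp_all
    have Tg: "inT g" unfolding inT_def W_def using gW
      by (intro conjI exI[of _ 1] exI[of _ 0] exI[of _ 1]) simp_all
    have VW: "inV W p" if "inV V p" for p using inV_mono[OF that] unfolding W_def by blast
    have Tmult: "inT (m * t)" if hyp: "inT t" "inV W m" for m t
    proof -
      obtain c a b where cab: "inV V c" "c \<noteq> 0" "inV W a" "inV W b" "c * t = a * f + b * g" "inV W t"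
        using hyp(1) unfolding inT_def by blast
      have "c * (m * t) = m * (c * t)" by (simp add: algebra_simps)
      also have "\<dots> = (m * a) * f + (m * b) * g" unfolding cab(5) by (simp add: algebra_simps)
      finally have "c * (m * t) = (m * a) * f + (m * b) * g" .
      then show ?thesis unfolding inT_def using cab hyp(2)
        by (intro conjI exI[of _ c] exI[of _ "m * a"] exI[of _ "m * b"] inV_mult) simp_all
    qed
    have Tdiff: "inT (t1 - t2)" if hyp: "inT t1" "inT t2" for t1 t2
    proof -
      obtain c1 a1 b1 where 1: "inV V c1" "c1 \<noteq> 0" "inV W a1" "inV W b1" "c1 * t1 = a1 * f + b1 * g" "inV W t1"
        using hyp(1) unfolding inT_def by blast
      obtain c2 a2 b2 where 2: "inV V c2" "c2 \<noteq> 0" "inV W a2" "inV W b2" "c2 * t2 = a2 * f + b2 * g" "inV W t2"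
        using hyp(2) unfolding inT_def by blast
      have "(c1 * c2) * (t1 - t2) = (c2 * a1 - c1 * a2) * f + (c2 * b1 - c1 * b2) * g"
      proof -
        have "(c1 * c2) * (t1 - t2) = c2 * (c1 * t1) - c1 * (c2 * t2)" by (simp add: algebra_simps)
        also have "\<dots> = (c2 * a1 - c1 * a2) * f + (c2 * b1 - c1 * b2) * g"
          unfolding 1(5) 2(5) by (simp add: algebra_simps)
        finally show ?thesis .
      qed
      moreover have "inV V (c1 * c2)" using 1(1) 2(1) by (rule inV_mult)
      moreover have "c1 * c2 \<noteq> 0" using 1(2) 2(2) by simp
      moreover have "inV W (c2 * a1 - c1 * a2)"
        by (rule inV_diff[OF inV_mult[OF VW[OF 2(1)] 1(3)] inV_mult[OF VW[OF 1(1)] 2(3)]])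
      moreover have "inV W (c2 * b1 - c1 * b2)"
        by (rule inV_diff[OF inV_mult[OF VW[OF 2(1)] 1(4)] inV_mult[OF VW[OF 1(1)] 2(4)]])
      moreover have "inV W (t1 - t2)" using 1(6) 2(6) by (rule inV_diff)
      ultimately show ?thesis unfolding inT_def
        by (intro conjI exI[of _ "c1 * c2"] exI[of _ "c2 * a1 - c1 * a2"] exI[of _ "c2 * b1 - c1 * b2"])
    qed
    have Tdivc: "inT r" if hyp: "inT (p * r)" "inV V p" "p \<noteq> 0" "inV W r" for p r
    proof -
      obtain c a b where cab: "inV V c" "c \<noteq> 0" "inV W a" "inV W b" "c * (p * r) = a * f + b * g"
        using hyp(1) unfolding inT_def by blast
      have "(c * p) * r = a * f + b * g" using cab(5) by (simp add: algebra_simps)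
      moreover have "inV V (c * p)" using cab(1) hyp(2) by (rule inV_mult)
      moreover have "c * p \<noteq> 0" using cab(2) hyp(3) by simp
      ultimately show ?thesis unfolding inT_def using hyp(4) cab(3,4)
        by (intro conjI exI[of _ "c * p"] exI[of _ a] exI[of _ b]) simp_all
    qed
    define P where "P n \<longleftrightarrow> (\<exists>r. inT r \<and> r \<noteq> 0 \<and> wdeg (vw x) r = n)" for n
    define \<delta> where "\<delta> = (LEAST n. P n)"
    have "P (wdeg (vw x) f)" unfolding P_def using Tf f0 by blast
    then have P\<delta>: "P \<delta>" unfolding \<delta>_def by (rule LeastI)
    have minimal: "\<delta> \<le> wdeg (vw x) s" if "inT s" "s \<noteq> 0" for s
      unfolding \<delta>_def using that by (intro Least_le) (auto simp: P_def)
    (* pseudo-division by a minimal element gives exact divisibility *)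
    have exact: "\<exists>k q. lcx x r ^ k * t = q * r \<and> inV W q" if hyp: "inT r" "r \<noteq> 0" "wdeg (vw x) r = \<delta>" "inT t" for r t
    proof -
      have rW: "inV W r" "inV W t" using hyp unfolding inT_def by blast+
      obtain k q s where kqs: "lcx x r ^ k * t = q * r + s" "s = 0 \<or> wdeg (vw x) s < wdeg (vw x) r"
          "inV W q" "inV W s"
        using pdiv[OF hyp(2) xW rW(1) rW(2)] by blast
      have "s = lcx x r ^ k * t - q * r" using kqs(1) by (simp add: algebra_simps)
      moreover have "inV W (lcx x r ^ k)" using lcx_inV[OF rW(1)] by (rule inV_power)
      moreover have "inT (lcx x r ^ k * t)" using Tmult[OF hyp(4)] \<open>inV W (lcx x r ^ k)\<close> .
      moreover have "inT (q * r)" using Tmult[OF hyp(1) kqs(3)] .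
      ultimately have sT: "inT s" using Tdiff by simp
      have "s = 0"
      proof (rule ccontr)
        assume "s \<noteq> 0"
        then have "\<delta> \<le> wdeg (vw x) s" using minimal[OF sT] by blast
        moreover have "wdeg (vw x) s < \<delta>" using kqs(2) \<open>s \<noteq> 0\<close> hyp(3) by simp
        ultimately show False by simp
      qed
      then show ?thesis using kqs(1,3) by auto
    qed
    have "\<delta> = 0"
    proof (rule ccontr)
      assume d0: "\<delta> \<noteq> 0"
      obtain r where r: "inT r" "r \<noteq> 0" "wdeg (vw x) r = \<delta>" using P\<delta> unfolding P_def by blast
      obtain k q where kq: "lcx x r ^ k * f = q * r" "inV W q" using exact[OF r Tf] by blast
      have cancR: "\<exists>r'. inT r' \<and> r' \<noteq> 0 \<and> wdeg (vw x) r' = \<delta> \<and> r' dvd f"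
        if "inV V c" "c \<noteq> 0" "inT r" "r \<noteq> 0" "wdeg (vw x) r = \<delta>" "c * f = q * r" for c q r
        using that
      proof (induction "tdeg c" arbitrary: c q r rule: less_induct)
        case less
        show ?case
        proof (cases "c dvd 1")
          case True
          then obtain c' where "1 = c * c'" by (auto elim: dvdE)
          then have "f = c' * (c * f)" by (simp add: algebra_simps)
          then have "f = (c' * q) * r" using less.prems(6) by (simp add: algebra_simps)
          then have "r dvd f" by simp
          then show ?thesis using less.prems(3,4,5) by (intro exI[of _ r]) simp
        next
          case False
          obtain p where p: "irr p" "inV V p" "p dvd c" using irr_factor[OF less.prems(1,2) False] by blast
          have p0: "p \<noteq> 0" using irr_nz[OF p(1)] .
          obtain c' where c': "c = p * c'" "inV V c'" using inV_div'[OF less.prems(1) p(3) p0] by blast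
          have c'0: "c' \<noteq> 0" using c' less.prems(2) by auto
          have "tdeg c = tdeg p + tdeg c'" using wmult(1)[OF mdeg_add p0 c'0] c'(1) by simp
          moreover have "tdeg p > 0" using nonunit_tdeg[OF p0 irr_nonunit[OF p(1)]] .
          ultimately have lt: "tdeg c' < tdeg c" by simp
          have rW: "inV W r" using less.prems(3) unfolding inT_def by blast
          have cfW: "inV W (c * f)"
            using inV_mult[OF inV_mono[OF less.prems(1)] fW] unfolding W_def by blast
          have cf0: "c * f \<noteq> 0" using less.prems(2) f0 by simp
          then have q0: "q \<noteq> 0" using less.prems(6) by auto
          have qW: "inV W q" using inV_div[of W r q] cfW less.prems(4,6) q0 by (simp add: mult.commute)
          have "q * r = p * (c' * f)" using less.prems(6) c'(1) by (simp add: algebra_simps)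
          then have "p dvd q * r" by simp
          then have "p dvd q \<or> p dvd r"
            using gauss_const[OF PV xV p(2) p(1)] qW rW unfolding W_def by blast
          then show ?thesis
          proof
            assume "p dvd q"
            then obtain q' where q': "q = p * q'" by (auto elim: dvdE)
            have "p * (c' * f) = p * (q' * r)" using less.prems(6) c'(1) q' by (simp add: algebra_simps)
            then have e: "c' * f = q' * r" using p0 by simp
            show ?thesis by (rule less.hyps[OF lt c'(2) c'0 less.prems(3,4,5) e])
          next
            assume "p dvd r"
            then obtain r'' where r'': "r = p * r''" by (auto elim: dvdE)
            have r''0: "r'' \<noteq> 0" using r'' less.prems(4) by auto
            have r''W: "inV W r''" using inV_div[of W p r''] rW r'' p0 r''0 by blast
            have Tpr: "inT (p * r'')" using less.prems(3) r'' by blast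
            have Tr'': "inT r''" by (rule Tdivc[OF Tpr p(2) p0 r''W])
            have "wdeg (vw x) r = wdeg (vw x) p + wdeg (vw x) r''"
              using wmult(1)[OF vw_add[of x] p0 r''0] r'' by simp
            then have dr'': "wdeg (vw x) r'' = \<delta>" using free_of_inV[OF p(2) xV] less.prems(5) by simp
            have "p * (c' * f) = p * (q * r'')" using less.prems(6) c'(1) r'' by (simp add: algebra_simps)
            then have e: "c' * f = q * r''" using p0 by simp
            show ?thesis by (rule less.hyps[OF lt c'(2) c'0 Tr'' r''0 dr'' e])
          qed
        qed
      qed
      have lr0: "lcx x r ^ k \<noteq> 0" using lcx_nz[OF r(2)] by simp
      have rW': "inV (insert x V) r" using r(1) unfolding inT_def W_def by blast
      have lrV: "inV V (lcx x r ^ k)" by (rule inV_power[OF lcx_inV_insert[OF rW']])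
      obtain r' where r': "inT r'" "r' \<noteq> 0" "wdeg (vw x) r' = \<delta>" "r' dvd f"
        using cancR[OF lrV lr0 r kq(1)] by blast
      obtain u where u: "f = r' * u" using r'(4) by (auto elim: dvdE)
      have "\<not> r' dvd 1" using unit_vw[of r' x] r'(3) d0 by auto
      then have "u dvd 1" using irr_split[OF irf u] by blast
      then obtain u' where "1 = u * u'" by (auto elim: dvdE)
      then have "r' = r' * (u * u')" by simp
      then have "r' = f * u'" using u by (simp add: algebra_simps)
      then have fr': "f dvd r'" by simp
      obtain m q2 where mq: "lcx x r' ^ m * g = q2 * r'" "inV W q2" using exact[OF r'(1,2,3) Tg] by blast
      have "f dvd lcx x r' ^ m * g" using mq(1) fr' by (simp add: dvd_mult)
      moreover have r'W: "inV (insert x V) r'" using r'(1) unfolding inT_def W_def by blast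
      moreover have "inV V (lcx x r' ^ m)" by (rule inV_power[OF lcx_inV_insert[OF r'W]])
      moreover have "lcx x r' ^ m \<noteq> 0" using lcx_nz[OF r'(2)] by simp
      ultimately have "f dvd g" using canc gW by blast
      then show False using nfg by simp
    qed
    then obtain r where r: "inT r" "r \<noteq> 0" "wdeg (vw x) r = 0" using P\<delta> unfolding P_def by blast
    obtain c a b where cab: "inV V c" "c \<noteq> 0" "inV W a" "inV W b" "c * r = a * f + b * g" "inV W r"
      using r(1) unfolding inT_def by blast
    have rV: "inV V r" using inV_insert[of x V r] cab(6) r(3) unfolding W_def by blast
    have "(c * r) * h = a * h * f + b * (g * h)" using cab(5) by (simp add: algebra_simps)
    then have "f dvd (c * r) * h" using fgh by (simp add: dvd_add dvd_mult)
    moreover have "inV V (c * r)" using cab(1) rV by (rule inV_mult)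
    moreover have "c * r \<noteq> 0" using cab(2) r(2) by simp
    ultimately show "f dvd h" using canc hW by blast
    qed
    then show ?thesis by simp
  qed
qed

lemma PrimeV_empty: "PrimeV {} TYPE(('v::{finite,linorder},'a::field) mpoly)"
  unfolding PrimeV_def
proof (intro allI impI)
  fix f g h :: "('v,'a) mpoly"
  assume a: "inV {} f" "irr f"
  have "\<forall>J\<in>ks f. mdeg J = 0"
  proof
    fix J assume "J \<in> ks f"
    then have "J = 0" using a(1) unfolding inV_def by (intro poly_mapping_eqI) simp
    then show "mdeg J = 0" by (simp add: mdeg_def)
  qed
  then have "tdeg f = 0" by (simp add: wdeg_zero_iff)
  then have "f dvd 1" using tdeg0_unit irr_nz[OF a(2)] by blast
  then show "f dvd g \<or> f dvd h" using irr_nonunit[OF a(2)] by blast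
qed

lemma PrimeV_fin: "finite V \<Longrightarrow> PrimeV V TYPE(('v::{finite,linorder},'a::field) mpoly)"
proof (induction V rule: finite_induct)
  case empty then show ?case by (rule PrimeV_empty)
next
  case (insert x F)
  show ?case unfolding PrimeV_def
    using prime_step[OF insert.IH insert.hyps(2)] by blast
qed

lemma mp_prime:
  fixes f :: "('v::{finite,linorder}, 'a::field) mpoly"
  assumes "irr f" "f dvd g * h"
  shows "f dvd g \<or> f dvd h"
  using PrimeV_D[OF PrimeV_fin[OF finite_UNIV] inV_UNIV inV_UNIV inV_UNIV assms] .

lemma euclid:
  fixes A B Q :: "('v::{finite,linorder}, 'a::field) mpoly"
  shows "(\<forall>T. T dvd A \<and> T dvd B \<longrightarrow> T dvd 1) \<Longrightarrow> A dvd Q * B \<Longrightarrow> A dvd Q"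
proof (induction "tdeg A" arbitrary: A Q rule: less_induct)
  case less
  show ?case
  proof (cases "A = 0")
    case True
    then have "Q * B = 0" using less.prems(2) by simp
    then have "Q = 0 \<or> B = 0" by simp
    then show ?thesis
    proof
      assume "B = 0"
      then have "A dvd 1" using less.prems(1) by simp
      then show ?thesis using True by simp
    qed (simp add: True)
  next
    case A0: False
    show ?thesis
    proof (cases "A dvd 1")
      case True show ?thesis by (rule dvd_trans[OF True one_dvd])
    next
      case False
      obtain p where p: "irr p" "p dvd A" using irr_factor[OF inV_UNIV A0 False] by blast
      have p0: "p \<noteq> 0" using irr_nz[OF p(1)] .
      obtain A' where A': "A = p * A'" using p(2) by (auto elim: dvdE)
      have A'0: "A' \<noteq> 0" using A' A0 by auto
      have "tdeg A = tdeg p + tdeg A'" using wmult(1)[OF mdeg_add p0 A'0] A' by simp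
      moreover have "tdeg p > 0" using nonunit_tdeg[OF p0 irr_nonunit[OF p(1)]] .
      ultimately have lt: "tdeg A' < tdeg A" by simp
      have "p dvd Q * B" using p(2) less.prems(2) by (rule dvd_trans)
      then have "p dvd Q \<or> p dvd B" using mp_prime[OF p(1)] by blast
      then show ?thesis
      proof
        assume "p dvd B"
        then have "p dvd 1" using less.prems(1) p(2) by blast
        then show ?thesis using irr_nonunit[OF p(1)] by blast
      next
        assume "p dvd Q"
        then obtain Q' where Q': "Q = p * Q'" by (auto elim: dvdE)
        obtain t where t: "Q * B = A * t" using less.prems(2) by (auto elim: dvdE)
        have "p * (Q' * B) = p * (A' * t)" using t Q' A' by (simp add: algebra_simps)
        then have "Q' * B = A' * t" using p0 by simp
        then have d: "A' dvd Q' * B" by simp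
        have cop: "\<forall>T. T dvd A' \<and> T dvd B \<longrightarrow> T dvd 1"
        proof (intro allI impI)
          fix T assume "T dvd A' \<and> T dvd B"
          then have "T dvd A" "T dvd B" using A' by auto
          then show "T dvd 1" using less.prems(1) by blast
        qed
        have "A' dvd Q'" by (rule less.hyps[OF lt cop d])
        then show ?thesis using A' Q' by simp
      qed
    qed
  qed
qed

definition Iset :: "('v \<Rightarrow>\<^sub>0 nat) \<Rightarrow> ('v \<Rightarrow>\<^sub>0 nat) set" where
  "Iset J = {I. \<forall>i. lk I i \<le> lk J i}"

definition tm :: "('v::{finite,linorder} \<Rightarrow> 'a::field \<Rightarrow> 'a) \<Rightarrow> 'a \<Rightarrow> 'a \<Rightarrow> ('v \<Rightarrow>\<^sub>0 nat) \<Rightarrow> ('v \<Rightarrow>\<^sub>0 nat) \<Rightarrow> ('v, 'a) mpoly" where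
  "tm der a b J K = (\<Sum>I\<in>Iset J. sg (J - I + K) (a * of_nat (mchoose J I) * dpow der I b))"

lemma op_comp_tm: "op_comp der L M = (\<Sum>J\<in>ks L. \<Sum>K\<in>ks M. tm der (lk L J) (lk M K) J K)"
  unfolding op_comp_def tm_def Iset_def ..

lemma finite_Iset: "finite (Iset (J :: 'v::finite \<Rightarrow>\<^sub>0 nat))"
proof -
  have "lk ` Iset J \<subseteq> Pi\<^sub>E UNIV (\<lambda>i. {..lk J i})"
  proof (rule subsetI)
    fix f assume "f \<in> lk ` Iset J"
    then obtain I where I: "I \<in> Iset J" "f = lk I" by blast
    then show "f \<in> Pi\<^sub>E UNIV (\<lambda>i. {..lk J i})" unfolding PiE_UNIV_domain Pi_def Iset_def by simp
  qed
  moreover have "finite (Pi\<^sub>E UNIV (\<lambda>i. {..lk J i}))" by (rule finite_PiE) simp_all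
  ultimately have "finite (lk ` Iset J)" by (rule finite_subset)
  moreover have "inj_on lk (Iset J)" by (rule inj_onI) (rule poly_mapping_eqI, simp)
  ultimately show ?thesis by (rule finite_imageD)
qed

definition dadd :: "('v \<Rightarrow> 'a::field \<Rightarrow> 'a) \<Rightarrow> bool" where
  "dadd der \<longleftrightarrow> (\<forall>i a b. der i (a + b) = der i a + der i b)"

lemma dadd_of: "commuting_derivations der \<Longrightarrow> dadd der"
  unfolding commuting_derivations_def is_derivation_def dadd_def by blast

lemma funpow_additive:
  fixes f :: "'a::ab_group_add \<Rightarrow> 'a"
  shows "(\<And>a b. f (a + b) = f a + f b) \<Longrightarrow> (f ^^ n) (a + b) = (f ^^ n) a + (f ^^ n) b"
  by (induction n) auto

lemma foldr_additive:
  fixes g :: "'i \<Rightarrow> 'a::ab_group_add \<Rightarrow> 'a"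
  shows "(\<And>i a b. g i (a + b) = g i a + g i b) \<Longrightarrow> foldr g xs (a + b) = foldr g xs a + foldr g xs b"
  by (induction xs) auto

lemma dpow_add: "dadd der \<Longrightarrow> dpow der I (a + b) = dpow der I a + dpow der I b"
  unfolding dpow_def dadd_def
  by (rule foldr_additive) (rule funpow_additive, blast)

lemma additive_zero:
  fixes f :: "'a::ab_group_add \<Rightarrow> 'a"
  shows "(\<And>a b. f (a + b) = f a + f b) \<Longrightarrow> f 0 = 0"
proof -
  assume "\<And>a b. f (a + b) = f a + f b"
  then have "f (0 + 0) = f 0 + f 0" by blast
  then show ?thesis by simp
qed

lemma dpow_0: "dadd der \<Longrightarrow> dpow der I 0 = 0"
  using additive_zero[of "dpow der I"] dpow_add by blast

lemma tm_add1: "tm der (a + a') b J K = tm der a b J K + tm der a' b J K"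
  unfolding tm_def by (simp add: sum.distrib[symmetric] single_add[symmetric] algebra_simps)

lemma tm_add2: "dadd der \<Longrightarrow> tm der a (b + b') J K = tm der a b J K + tm der a b' J K"
  unfolding tm_def by (simp add: dpow_add sum.distrib[symmetric] single_add[symmetric] algebra_simps)

lemma tm_01: "tm der 0 b J K = 0" unfolding tm_def by simp
lemma tm_02: "dadd der \<Longrightarrow> tm der a 0 J K = 0" unfolding tm_def by (simp add: dpow_0)

lemma op_comp_super:
  assumes D: "dadd der" and "finite SA" "ks L \<subseteq> SA" "finite SB" "ks M \<subseteq> SB"
  shows "op_comp der L M = (\<Sum>J\<in>SA. \<Sum>K\<in>SB. tm der (lk L J) (lk M K) J K)"
proof -
  have "op_comp der L M = (\<Sum>J\<in>ks L. \<Sum>K\<in>SB. tm der (lk L J) (lk M K) J K)"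
    unfolding op_comp_tm
  proof (rule sum.cong[OF refl])
    fix J show "(\<Sum>K\<in>ks M. tm der (lk L J) (lk M K) J K) = (\<Sum>K\<in>SB. tm der (lk L J) (lk M K) J K)"
      by (rule sum.mono_neutral_left) (use assms in \<open>auto simp: in_keys_iff tm_02\<close>)
  qed
  also have "\<dots> = (\<Sum>J\<in>SA. \<Sum>K\<in>SB. tm der (lk L J) (lk M K) J K)"
    by (rule sum.mono_neutral_left) (use assms in \<open>auto simp: in_keys_iff tm_01\<close>)
  finally show ?thesis .
qed

lemma op_comp_add1:
  assumes D: "dadd der"
  shows "op_comp der (A + B) C = op_comp der A C + op_comp der B C"
proof -
  define S where "S = ks A \<union> ks B"
  have fS: "finite S" unfolding S_def by simp
  have s1: "ks (A + B) \<subseteq> S" unfolding S_def by (rule keys_add)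
  have "op_comp der (A + B) C = (\<Sum>J\<in>S. \<Sum>K\<in>ks C. tm der (lk (A+B) J) (lk C K) J K)"
    by (rule op_comp_super[OF D fS s1 finite_keys subset_refl])
  also have "\<dots> = (\<Sum>J\<in>S. \<Sum>K\<in>ks C. tm der (lk A J) (lk C K) J K) + (\<Sum>J\<in>S. \<Sum>K\<in>ks C. tm der (lk B J) (lk C K) J K)"
    by (simp add: lookup_add tm_add1 sum.distrib)
  also have "\<dots> = op_comp der A C + op_comp der B C"
  proof -
    have eA: "op_comp der A C = (\<Sum>J\<in>S. \<Sum>K\<in>ks C. tm der (lk A J) (lk C K) J K)"
      by (rule op_comp_super[OF D fS _ finite_keys subset_refl]) (simp add: S_def)
    have eB: "op_comp der B C = (\<Sum>J\<in>S. \<Sum>K\<in>ks C. tm der (lk B J) (lk C K) J K)"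
      by (rule op_comp_super[OF D fS _ finite_keys subset_refl]) (simp add: S_def)
    show ?thesis unfolding eA eB ..
  qed
  finally show ?thesis .
qed

lemma op_comp_add2:
  assumes D: "dadd der"
  shows "op_comp der C (A + B) = op_comp der C A + op_comp der C B"
proof -
  define S where "S = ks A \<union> ks B"
  have fS: "finite S" unfolding S_def by simp
  have s1: "ks (A + B) \<subseteq> S" unfolding S_def by (rule keys_add)
  have "op_comp der C (A + B) = (\<Sum>J\<in>ks C. \<Sum>K\<in>S. tm der (lk C J) (lk (A+B) K) J K)"
    by (rule op_comp_super[OF D finite_keys subset_refl fS s1])
  also have "\<dots> = (\<Sum>J\<in>ks C. \<Sum>K\<in>S. tm der (lk C J) (lk A K) J K) + (\<Sum>J\<in>ks C. \<Sum>K\<in>S. tm der (lk C J) (lk B K) J K)"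
    by (simp add: lookup_add tm_add2[OF D] sum.distrib)
  also have "\<dots> = op_comp der C A + op_comp der C B"
  proof -
    have eA: "op_comp der C A = (\<Sum>J\<in>ks C. \<Sum>K\<in>S. tm der (lk C J) (lk A K) J K)"
      by (rule op_comp_super[OF D finite_keys subset_refl fS]) (simp add: S_def)
    have eB: "op_comp der C B = (\<Sum>J\<in>ks C. \<Sum>K\<in>S. tm der (lk C J) (lk B K) J K)"
      by (rule op_comp_super[OF D finite_keys subset_refl fS]) (simp add: S_def)
    show ?thesis unfolding eA eB ..
  qed
  finally show ?thesis .
qed

lemma op_comp_0 [simp]: "op_comp der 0 M = 0" "op_comp der L 0 = 0"
  by (simp_all add: op_comp_def)

lemma mchoose_0 [simp]: "mchoose J 0 = 1"
  by (simp add: mchoose_def)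

lemma foldr_funpow0: "foldr (\<lambda>i. id) xs b = b"
  by (induction xs) simp_all

lemma dpow_zero_idx [simp]: "dpow der 0 b = b"
  unfolding dpow_def by (simp add: foldr_funpow0)

lemma zero_Iset: "0 \<in> Iset J" by (simp add: Iset_def)

lemma tm_split:
  "tm der a b J K = sg (J + K) (a * b) +
     (\<Sum>I\<in>Iset J - {0}. sg (J - I + K) (a * of_nat (mchoose J I) * dpow der I b))"
  unfolding tm_def by (simp add: sum.remove[OF finite_Iset zero_Iset])

lemma mult_repr:
  "(A::('v::{finite,linorder},'a::field) mpoly) * B = (\<Sum>J\<in>ks A. \<Sum>K\<in>ks B. sg (J + K) (lk A J * lk B K))"
proof -
  have "A * B = (\<Sum>J\<in>ks A. sg J (lk A J)) * (\<Sum>K\<in>ks B. sg K (lk B K))" by (simp only: repr)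
  also have "\<dots> = (\<Sum>J\<in>ks A. \<Sum>K\<in>ks B. sg J (lk A J) * sg K (lk B K))" by (rule sum_product)
  also have "\<dots> = (\<Sum>J\<in>ks A. \<Sum>K\<in>ks B. sg (J + K) (lk A J * lk B K))" by (simp add: mult_single)
  finally show ?thesis .
qed

definition Rst :: "('v::{finite,linorder} \<Rightarrow> 'a::field \<Rightarrow> 'a) \<Rightarrow> ('v, 'a) mpoly \<Rightarrow> ('v, 'a) mpoly \<Rightarrow> ('v, 'a) mpoly" where
  "Rst der A B = (\<Sum>J\<in>ks A. \<Sum>K\<in>ks B. \<Sum>I\<in>Iset J - {0}.
      sg (J - I + K) (lk A J * of_nat (mchoose J I) * dpow der I (lk B K)))"

lemma op_comp_split: "op_comp der A B = A * B + Rst der A B"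
  unfolding op_comp_tm tm_split Rst_def mult_repr by (simp add: sum.distrib)

lemma keys_sum_sub: "(\<And>i. i \<in> I \<Longrightarrow> ks (f i) \<subseteq> S) \<Longrightarrow> ks (sum f I) \<subseteq> S"
  using keys_sum[of f I] by blast

lemma mdeg_minus: "I \<in> Iset J \<Longrightarrow> mdeg (J - I) + mdeg I = mdeg (J :: 'v::finite \<Rightarrow>\<^sub>0 nat)"
proof -
  assume "I \<in> Iset J"
  then have "J - I + I = J" unfolding Iset_def
    by (intro poly_mapping_eqI) (simp add: lookup_add lookup_minus)
  then show ?thesis using mdeg_add[of "J - I" I] by simp
qed

lemma keys_Rst:
  fixes A B :: "('v::{finite,linorder}, 'a::field) mpoly"
  shows "K' \<in> ks (Rst der A B) \<Longrightarrow> mdeg K' < wdeg mdeg A + wdeg mdeg B"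
proof -
  assume a: "K' \<in> ks (Rst der A B)"
  define S where "S = {K' :: 'v \<Rightarrow>\<^sub>0 nat. mdeg K' < wdeg mdeg A + wdeg mdeg B}"
  have "ks (Rst der A B) \<subseteq> S"
    unfolding Rst_def
  proof (intro keys_sum_sub)
    fix J K I assume J: "J \<in> ks A" and K: "K \<in> ks B" and I: "I \<in> Iset J - {0}"
    have "mdeg I > 0" using I mdeg_eq0[of I] by (cases "mdeg I") auto
    moreover have "mdeg (J - I) + mdeg I = mdeg J" using I mdeg_minus by blast
    moreover have "mdeg J \<le> wdeg mdeg A" using wdeg_ge[OF J] .
    moreover have "mdeg K \<le> wdeg mdeg B" using wdeg_ge[OF K] .
    ultimately have "mdeg (J - I + K) < wdeg mdeg A + wdeg mdeg B" by (simp add: mdeg_add)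
    then show "ks (sg (J - I + K) (lk A J * of_nat (mchoose J I) * dpow der I (lk B K))) \<subseteq> S"
      unfolding S_def by simp
  qed
  then show ?thesis using a unfolding S_def by blast
qed

lemma op_comp_sym:
  fixes A B :: "('v::{finite,linorder}, 'a::field) mpoly"
  assumes A: "A \<noteq> 0" and B: "B \<noteq> 0"
  shows "wdeg mdeg (op_comp der A B) = wdeg mdeg A + wdeg mdeg B"
    "wtop mdeg (op_comp der A B) = wtop mdeg A * wtop mdeg B"
    "op_comp der A B \<noteq> 0"
proof -
  have X0: "A * B \<noteq> 0" using A B by simp
  note m = wmult[OF mdeg_add A B]
  have kR: "\<forall>K\<in>ks (Rst der A B). mdeg K < wdeg mdeg (A * B)" using keys_Rst m(1) by metis
  note p = wperturb[OF X0 kR]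
  show 1: "wdeg mdeg (op_comp der A B) = wdeg mdeg A + wdeg mdeg B"
    using p(1) m(1) op_comp_split[of der A B] by simp
  show 2: "wtop mdeg (op_comp der A B) = wtop mdeg A * wtop mdeg B"
    using p(2) m(2) op_comp_split[of der A B] by simp
  have "wtop mdeg A * wtop mdeg B \<noteq> 0" using wtop_nz[OF A] wtop_nz[OF B] by simp
  then show "op_comp der A B \<noteq> 0" using 2 by auto
qed

lemma Sym_eq: "Sym (L::('v::{finite,linorder}, 'a::field) mpoly) = wtop mdeg L"
proof (rule poly_mapping_eqI)
  fix J
  have fin: "finite {J. (if ereal (real (mdeg J)) = ord L then lk L J else 0) \<noteq> 0}"
    by (rule finite_subset[of _ "ks L"]) (auto simp: in_keys_iff split: if_splits)
  have "lk (Sym L) J = (if ereal (real (mdeg J)) = ord L then lk L J else 0)"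
    unfolding Sym_def using fin by simp
  also have "\<dots> = lk (wtop mdeg L) J"
  proof (cases "L = 0")
    case True then show ?thesis by simp
  next
    case False
    then have "ord L = ereal (real (wdeg mdeg L))" unfolding ord_def wdeg_def by simp
    then show ?thesis by (simp add: lookup_wtop)
  qed
  finally show "lk (Sym L) J = lk (wtop mdeg L) J" .
qed

lemma ord_eq: "L \<noteq> 0 \<Longrightarrow> ord L = ereal (real (wdeg mdeg L))"
  unfolding ord_def wdeg_def by simp

lemma ord_less: "ord X < ereal (real n) \<Longrightarrow> K \<in> ks X \<Longrightarrow> mdeg K < n"
proof -
  assume a: "ord X < ereal (real n)" "K \<in> ks X"
  then have X0: "X \<noteq> 0" by auto
  then have "wdeg mdeg X < n" using a(1) ord_eq[OF X0] by simp
  then show ?thesis using wdeg_ge[OF a(2), of mdeg] by simp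
qed

lemma homog: "homogeneous P k \<Longrightarrow> P \<noteq> 0 \<and> wdeg mdeg P = k \<and> wtop mdeg P = P"
proof -
  assume h: "homogeneous P k"
  then have P0: "P \<noteq> 0" and kk: "\<forall>J\<in>ks P. mdeg J = k" unfolding homogeneous_def by auto
  obtain J where "J \<in> ks P" using P0 by (metis ex_in_conv keys_eq_empty)
  then have d: "wdeg mdeg P = k" using kk by (intro wdeg_eqI[of J]) auto
  have "wtop mdeg P = P" using kk d by (intro wtop_homog) simp
  then show ?thesis using P0 d by simp
qed

lemma wtop_uminus: "wtop w (- Y) = - wtop w (Y :: 'k \<Rightarrow>\<^sub>0 'a::ab_group_add)"
proof -
  have "wdeg w (- Y) = wdeg w Y" unfolding wdeg_def by simp
  then show ?thesis by (intro poly_mapping_eqI) (simp add: lookup_wtop)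
qed

theorem mainTheorem1:
  fixes der :: "'v::{finite,linorder} \<Rightarrow> 'a::field \<Rightarrow> 'a"
    and L F1 F2 S0 S1 S2 :: "('v, 'a) mpoly"
    and d d0 d1 d2 :: nat
  assumes "commuting_derivations der"
    and "L \<noteq> 0" and "ord L = ereal (real d)"
    and "Sym L = S1 * S2"
    and "homogeneous S1 d1" and "homogeneous S2 d2"
    and "is_gcd S0 S1 S2" and "homogeneous S0 d0"
    and "ord (L - op_comp der F1 F2) < ereal (real (d - d0))"
    and "Sym F1 = S1" and "Sym F2 = S2"
  shows "\<forall>G1 G2 H1 H2.
     (L = op_comp der G1 G2 \<and> Sym G1 = S1 \<and> Sym G2 = S2 \<and>
      ord (F1 - G1) < ereal (real ((d - d0) - (d - d1))) \<and>
      ord (F2 - G2) < ereal (real ((d - d0) - (d - d2)))) \<and>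
     (L = op_comp der H1 H2 \<and> Sym H1 = S1 \<and> Sym H2 = S2 \<and>
      ord (F1 - H1) < ereal (real ((d - d0) - (d - d1))) \<and>
      ord (F2 - H2) < ereal (real ((d - d0) - (d - d2))))
     \<longrightarrow> G1 = H1 \<and> G2 = H2"
proof (intro allI impI)
  fix G1 G2 H1 H2 :: "('v, 'a) mpoly"
  assume asm: "(L = op_comp der G1 G2 \<and> Sym G1 = S1 \<and> Sym G2 = S2 \<and>
      ord (F1 - G1) < ereal (real ((d - d0) - (d - d1))) \<and>
      ord (F2 - G2) < ereal (real ((d - d0) - (d - d2)))) \<and>
     (L = op_comp der H1 H2 \<and> Sym H1 = S1 \<and> Sym H2 = S2 \<and>
      ord (F1 - H1) < ereal (real ((d - d0) - (d - d1))) \<and>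
      ord (F2 - H2) < ereal (real ((d - d0) - (d - d2))))"
  then have LG: "L = op_comp der G1 G2" and sG1: "Sym G1 = S1" and sG2: "Sym G2 = S2"
    and oG1: "ord (F1 - G1) < ereal (real ((d - d0) - (d - d1)))"
    and oG2: "ord (F2 - G2) < ereal (real ((d - d0) - (d - d2)))"
    and LH: "L = op_comp der H1 H2" and sH1: "Sym H1 = S1" and sH2: "Sym H2 = S2"
    and oH1: "ord (F1 - H1) < ereal (real ((d - d0) - (d - d1)))"
    and oH2: "ord (F2 - H2) < ereal (real ((d - d0) - (d - d2)))"
    using asm by simp_all
  have D: "dadd der" using assms(1) by (rule dadd_of)
  note h1 = homog[OF assms(5)] and h2 = homog[OF assms(6)] and h0 = homog[OF assms(8)]
  have S10: "S1 \<noteq> 0" and S20: "S2 \<noteq> 0" and S00: "S0 \<noteq> 0" using h1 h2 h0 by auto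
  have dL: "wdeg mdeg L = d" using ord_eq[OF assms(2)] assms(3) by simp
  have "wdeg mdeg (S1 * S2) = d1 + d2" using wmult(1)[OF mdeg_add S10 S20] h1 h2 by simp
  moreover have "wdeg mdeg (S1 * S2) = d" using assms(4) Sym_eq[of L] wdeg_wtop[of mdeg L] dL by simp
  ultimately have dd: "d = d1 + d2" by simp
  obtain A where A: "S1 = S0 * A" using assms(7) unfolding is_gcd_def by (auto elim: dvdE)
  obtain B where B: "S2 = S0 * B" using assms(7) unfolding is_gcd_def by (auto elim: dvdE)
  have A0: "A \<noteq> 0" using A S10 by auto
  have B0: "B \<noteq> 0" using B S20 by auto
  have dA: "d1 = d0 + tdeg A" using wmult(1)[OF mdeg_add S00 A0] A h1 h0 by simp
  have dB: "d2 = d0 + tdeg B" using wmult(1)[OF mdeg_add S00 B0] B h2 h0 by simp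
  have e1: "(d - d0) - (d - d1) = tdeg A" using dd dA dB by simp
  have e2: "(d - d0) - (d - d2) = tdeg B" using dd dA dB by simp
  have nz: "X \<noteq> 0" if "Sym X = S" "S \<noteq> 0" for X S :: "('v, 'a) mpoly"
    using that Sym_eq[of X] by auto
  have G10: "G1 \<noteq> 0" using nz[OF sG1 S10] .
  have G20: "G2 \<noteq> 0" using nz[OF sG2 S20] .
  have H10: "H1 \<noteq> 0" using nz[OF sH1 S10] .
  have H20: "H2 \<noteq> 0" using nz[OF sH2 S20] .
  define P1 where "P1 = G1 - H1"
  define P2 where "P2 = G2 - H2"
  have kP1: "\<forall>K\<in>ks P1. mdeg K < tdeg A"
  proof
    fix K assume "K \<in> ks P1"
    moreover have "P1 = (F1 - H1) - (F1 - G1)" unfolding P1_def by simp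
    ultimately have "K \<in> ks (F1 - H1) \<union> ks (F1 - G1)" using keys_diff[of "F1 - H1" "F1 - G1"] by auto
    then show "mdeg K < tdeg A"
    proof
      assume "K \<in> ks (F1 - H1)" then show ?thesis using ord_less[OF oH1[unfolded e1]] by blast
    next
      assume "K \<in> ks (F1 - G1)" then show ?thesis using ord_less[OF oG1[unfolded e1]] by blast
    qed
  qed
  have kP2: "\<forall>K\<in>ks P2. mdeg K < tdeg B"
  proof
    fix K assume "K \<in> ks P2"
    moreover have "P2 = (F2 - H2) - (F2 - G2)" unfolding P2_def by simp
    ultimately have "K \<in> ks (F2 - H2) \<union> ks (F2 - G2)" using keys_diff[of "F2 - H2" "F2 - G2"] by auto
    then show "mdeg K < tdeg B"
    proof
      assume "K \<in> ks (F2 - H2)" then show ?thesis using ord_less[OF oH2[unfolded e2]] by blast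
    next
      assume "K \<in> ks (F2 - G2)" then show ?thesis using ord_less[OF oG2[unfolded e2]] by blast
    qed
  qed
  have "L = op_comp der (P1 + H1) G2" using LG unfolding P1_def by simp
  also have "\<dots> = op_comp der P1 G2 + op_comp der H1 (P2 + H2)"
    unfolding op_comp_add1[OF D] P2_def by simp
  also have "\<dots> = op_comp der P1 G2 + op_comp der H1 P2 + L"
    unfolding op_comp_add2[OF D] LH by (simp add: algebra_simps)
  finally have sum0: "op_comp der P1 G2 + op_comp der H1 P2 = 0" by simp
  have "P1 = 0 \<and> P2 = 0"
  proof (rule ccontr)
    assume nn: "\<not> (P1 = 0 \<and> P2 = 0)"
    show False
    proof (cases "P1 = 0")
      case True
      then have P20: "P2 \<noteq> 0" using nn by simp
      then show False using op_comp_sym(3)[OF H10 P20, of der] sum0 True by simp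
    next
      case P10: False
      show False
      proof (cases "P2 = 0")
        case True
        then show False using op_comp_sym(3)[OF P10 G20, of der] sum0 by simp
      next
        case P20: False
        have XY: "op_comp der P1 G2 = - op_comp der H1 P2" using sum0 by (simp add: eq_neg_iff_add_eq_0)
        have "wtop mdeg P1 * S2 = wtop mdeg (op_comp der P1 G2)"
          using op_comp_sym(2)[OF P10 G20, of der] sG2 Sym_eq[of G2] by simp
        also have "\<dots> = - wtop mdeg (op_comp der H1 P2)" unfolding XY by (rule wtop_uminus)
        also have "\<dots> = - (S1 * wtop mdeg P2)"
          using op_comp_sym(2)[OF H10 P20, of der] sH1 Sym_eq[of H1] by simp
        finally have "wtop mdeg P1 * S2 = - (S1 * wtop mdeg P2)" .
        then have "S0 * (wtop mdeg P1 * B) = S0 * (A * (- wtop mdeg P2))"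
          unfolding A B by (simp add: algebra_simps)
        then have "wtop mdeg P1 * B = A * (- wtop mdeg P2)" by (rule mult_left_cancel[THEN iffD1, OF S00])
        then have Adv: "A dvd wtop mdeg P1 * B" unfolding dvd_def by (intro exI[of _ "- wtop mdeg P2"])
        have cop: "\<forall>T. T dvd A \<and> T dvd B \<longrightarrow> T dvd 1"
        proof (intro allI impI)
          fix T assume "T dvd A \<and> T dvd B"
          then have "S0 * T dvd S0 * A" "S0 * T dvd S0 * B" by (simp_all add: mult_dvd_mono)
          then have t: "S0 * T dvd S1 \<and> S0 * T dvd S2" unfolding A B by simp
          have "\<forall>T. T dvd S1 \<and> T dvd S2 \<longrightarrow> T dvd S0" using assms(7) unfolding is_gcd_def by simp
          then have "S0 * T dvd S0" using t by simp
          then obtain k where "S0 = S0 * T * k" unfolding dvd_def by blast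
          then have "S0 * 1 = S0 * (T * k)" by (simp add: algebra_simps)
          then have "1 = T * k" by (rule mult_left_cancel[THEN iffD1, OF S00])
          then show "T dvd 1" by (rule dvdI)
        qed
        have "A dvd wtop mdeg P1" using euclid[OF cop Adv] .
        then obtain k where k: "wtop mdeg P1 = A * k" by (auto elim: dvdE)
        have w0: "wtop mdeg P1 \<noteq> 0" using wtop_nz[OF P10] .
        then have k0: "k \<noteq> 0" using k by auto
        have "tdeg (wtop mdeg P1) = tdeg A + tdeg k" using wmult(1)[OF mdeg_add A0 k0] k by simp
        moreover have "tdeg (wtop mdeg P1) = tdeg P1" by (rule wdeg_wtop)
        moreover have "tdeg P1 < tdeg A" using wdeg_lessI[OF kP1 P10] .
        ultimately show False by simp
      qed
    qed
  qed
  then show "G1 = H1 \<and> G2 = H2" unfolding P1_def P2_def by simp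
qed

end
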